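(* Let $a \geq 1$ and $\alpha > 0$. Consider the scalar system $X_{n+1} = a X_n + Z_n - U_n$, $n = 1, 2, \ldots$, where $X_1, Z_1, Z_2, \ldots$ are independent real random variables with bounded $\alpha$-th moments, i.e. $\mathbb{E}[|X_1|^\alpha] < \infty$ and $\sup_n \mathbb{E}[|Z_n|^\alpha] < \infty$. Then for every $0 < \beta < \alpha$, $$M^\star_\beta \leq \lfloor a \rfloor + 1.$$
   Context: An $M$-bin causal quantizer-controller is a sequence $\{\mathsf f_n, \mathsf g_n\}_{n=1}^\infty$ of (measurable) maps $\mathsf f_n \colon \mathbb{R}^n \to [M] = \{1,\ldots,M\}$ and $\mathsf g_n \colon [M]^n \to \mathbb{R}$; the control at time $n$ is $U_n = \mathsf g_n(\mathsf f_1(X_1), \mathsf f_2(X_1,X_2), \ldots, \mathsf f_n(X_1,\ldots,X_n))$. For $\beta > 0$, $M^\star_\beta$ is the minimum $M$ such that there exists an $M$-bin causal quantizer-controller for which the resulting state process satisfies $\limsup_{n\to\infty} \mathbb{E}[|X_n|^\beta] < \infty$ ($\beta$-moment stability). *)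

theory Defs
  imports "HOL-Probability.Probability"
begin

text \<open>Given the initial state x1, the noise
sequence z (z n = Z_n for n \<ge> 1), the quantizers f (f k maps (X_1,...,X_k),
encoded as a function on {1..k}, to a bin) and the controllers g (g n maps the bin
sequence on {1..n} to a real control), traj n is a function whose values at the
indices 1..n+1 are the states X_1,...,X_{n+1}.\<close>

primrec traj :: "real \<Rightarrow> (nat \<Rightarrow> (nat \<Rightarrow> real) \<Rightarrow> nat) \<Rightarrow> (nat \<Rightarrow> (nat \<Rightarrow> nat) \<Rightarrow> real)
    \<Rightarrow> real \<Rightarrow> (nat \<Rightarrow> real) \<Rightarrow> nat \<Rightarrow> (nat \<Rightarrow> real)" where
  "traj a f g x1 z 0 = (\<lambda>_. x1)"
| "traj a f g x1 z (Suc n) =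
     (let xs = traj a f g x1 z n;
          m = Suc n;
          u = g m (\<lambda>k\<in>{1..m}. f k (\<lambda>j\<in>{1..k}. xs j))
      in xs(Suc m := a * xs m + z m - u))"

definition state :: "real \<Rightarrow> (nat \<Rightarrow> (nat \<Rightarrow> real) \<Rightarrow> nat) \<Rightarrow> (nat \<Rightarrow> (nat \<Rightarrow> nat) \<Rightarrow> real)
    \<Rightarrow> ('w \<Rightarrow> real) \<Rightarrow> (nat \<Rightarrow> 'w \<Rightarrow> real) \<Rightarrow> nat \<Rightarrow> 'w \<Rightarrow> real" where
  "state a f g X1 Z n \<omega> = traj a f g (X1 \<omega>) (\<lambda>k. Z k \<omega>) n n"

text \<open>An Mb-bin causal quantizer-controller: each f n is a measurable map
from R^n (product Borel space indexed by {1..n}) to [Mb] = {1..Mb}; g n is an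
arbitrary map [Mb]^n \<rightarrow> R (only its values on {1..n}-indexed bin sequences matter).\<close>
definition quantizer_controller ::
    "nat \<Rightarrow> (nat \<Rightarrow> (nat \<Rightarrow> real) \<Rightarrow> nat) \<Rightarrow> (nat \<Rightarrow> (nat \<Rightarrow> nat) \<Rightarrow> real) \<Rightarrow> bool" where
  "quantizer_controller Mb f g \<longleftrightarrow>
     (\<forall>n\<ge>1. f n \<in> (\<Pi>\<^sub>M k\<in>{1..n}. (borel :: real measure)) \<rightarrow>\<^sub>M count_space {1..Mb})"

definition moment_stable :: "'w measure \<Rightarrow> real \<Rightarrow> ('w \<Rightarrow> real) \<Rightarrow> (nat \<Rightarrow> 'w \<Rightarrow> real)
    \<Rightarrow> real \<Rightarrow> (nat \<Rightarrow> (nat \<Rightarrow> real) \<Rightarrow> nat) \<Rightarrow> (nat \<Rightarrow> (nat \<Rightarrow> nat) \<Rightarrow> real) \<Rightarrow> bool" where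
  "moment_stable M a X1 Z \<beta> f g \<longleftrightarrow>
     limsup (\<lambda>n. \<integral>\<^sup>+ \<omega>. ennreal (\<bar>state a f g X1 Z n \<omega>\<bar> powr \<beta>) \<partial>M) < \<infinity>"

definition Mstar :: "'w measure \<Rightarrow> real \<Rightarrow> ('w \<Rightarrow> real) \<Rightarrow> (nat \<Rightarrow> 'w \<Rightarrow> real) \<Rightarrow> real \<Rightarrow> nat" where
  "Mstar M a X1 Z \<beta> =
     (LEAST Mb. \<exists>f g. quantizer_controller Mb f g \<and> moment_stable M a X1 Z \<beta> f g)"

end

theory Submission
  imports Defs
begin

lemma powr_neg_le1: "(x::real) \<ge> 1 \<Longrightarrow> e \<le> 0 \<Longrightarrow> x powr e \<le> 1"
  using powr_mono2'[of e 1 x] by simp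

lemma powr_sum_le:
  fixes x y r :: real
  assumes "x \<ge> 0" "y \<ge> 0" "r > 0"
  shows "(x + y) powr r \<le> 2 powr r * (x powr r + y powr r)"
proof -
  have "(x + y) powr r \<le> (2 * max x y) powr r"
    using assms by (intro powr_mono2) auto
  also have "\<dots> = 2 powr r * (max x y) powr r"
    using assms by (simp add: powr_mult)
  also have "(max x y) powr r \<le> x powr r + y powr r"
    using assms by (cases "x \<le> y") (auto simp: max_def)
  hence "2 powr r * (max x y) powr r \<le> 2 powr r * (x powr r + y powr r)"
    by (intro mult_left_mono) auto
  finally show ?thesis .
qed

lemma traj_stab: "k \<le> Suc n \<Longrightarrow> traj a f g x1 z (Suc n) k = traj a f g x1 z n k"
  by (simp add: Let_def)

declare traj.simps[simp del]

lemma traj_eq: "k \<le> Suc n \<Longrightarrow> traj a f g x1 z n k = traj a f g x1 z k k"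
proof (induction n arbitrary: k)
  case 0
  hence "k = 0 \<or> k = 1" by auto
  thus ?case
  proof
    assume "k = 1" thus ?thesis using traj_stab[of 1 0 a f g x1 z] by simp
  qed simp
next
  case (Suc n)
  show ?case
  proof (cases "k \<le> Suc n")
    case True
    have "traj a f g x1 z (Suc n) k = traj a f g x1 z n k" using True by (rule traj_stab)
    also have "\<dots> = traj a f g x1 z k k" using True by (rule Suc.IH)
    finally show ?thesis .
  next
    case False
    hence k: "k = Suc (Suc n)" using Suc.prems by simp
    show ?thesis unfolding k by (rule traj_stab[symmetric]) simp
  qed
qed

lemma traj_1: "traj a f g x1 z 1 1 = x1"
  using traj_eq[of 1 0 a f g x1 z] by (simp add: traj.simps(1))

lemma traj_Suc_at: "traj a f g x1 z (Suc n) (Suc (Suc n)) = a * traj a f g x1 z n (Suc n) + z (Suc n)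
   - g (Suc n) (\<lambda>k\<in>{1..Suc n}. f k (\<lambda>j\<in>{1..k}. traj a f g x1 z n j))"
  by (simp only: traj.simps Let_def fun_upd_same)

lemma traj_rec:
  assumes "m \<ge> 1"
  shows "traj a f g x1 z (Suc m) (Suc m) = a * traj a f g x1 z m m + z m
     - g m (\<lambda>k\<in>{1..m}. f k (\<lambda>j\<in>{1..k}. traj a f g x1 z j j))"
proof -
  obtain n where n: "m = Suc n" using assms by (cases m) auto
  have e: "traj a f g x1 z n j = traj a f g x1 z j j" if "j \<le> m" for j
  proof -
    have "j \<le> Suc n" using that n by simp
    thus ?thesis by (rule traj_eq)
  qed
  have 1: "(\<lambda>k\<in>{1..m}. f k (\<lambda>j\<in>{1..k}. traj a f g x1 z n j)) = (\<lambda>k\<in>{1..m}. f k (\<lambda>j\<in>{1..k}. traj a f g x1 z j j))"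
  proof (rule restrict_ext)
    fix k assume k: "k \<in> {1..m}"
    have "(\<lambda>j\<in>{1..k}. traj a f g x1 z n j) = (\<lambda>j\<in>{1..k}. traj a f g x1 z j j)"
    proof (rule restrict_ext)
      fix j assume "j \<in> {1..k}"
      thus "traj a f g x1 z n j = traj a f g x1 z j j" using k by (intro e) auto
    qed
    thus "f k (\<lambda>j\<in>{1..k}. traj a f g x1 z n j) = f k (\<lambda>j\<in>{1..k}. traj a f g x1 z j j)" by (rule arg_cong)
  qed
  have 2: "traj a f g x1 z (Suc m) (Suc m) = traj a f g x1 z m (Suc m)"
    by (rule traj_stab) simp
  have 3: "traj a f g x1 z n (Suc n) = traj a f g x1 z m m"
  proof -
    have "traj a f g x1 z n m = traj a f g x1 z m m" by (rule e) simp
    thus ?thesis by (simp only: n)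
  qed
  have 4: "traj a f g x1 z m (Suc m) = a * traj a f g x1 z n (Suc n) + z m
     - g m (\<lambda>k\<in>{1..m}. f k (\<lambda>j\<in>{1..k}. traj a f g x1 z n j))"
    unfolding n by (rule traj_Suc_at)
  show ?thesis unfolding 2 4 3 1 ..
qed

lemma pre_step: "a * (a ^ i * x + (\<Sum>i'<i. a ^ (i - 1 - i') * w i')) + w i
   = a ^ Suc i * x + (\<Sum>i'<Suc i. a ^ (Suc i - 1 - i') * (w i' :: real))"
proof -
  have "a * (\<Sum>i'<i. a ^ (i - 1 - i') * w i') = (\<Sum>i'<i. a ^ (Suc i - 1 - i') * w i')"
    unfolding sum_distrib_left
  proof (intro sum.cong refl)
    fix i' assume "i' \<in> {..<i}"
    hence "Suc i - 1 - i' = Suc (i - 1 - i')" by auto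
    thus "a * (a ^ (i - 1 - i') * w i') = a ^ (Suc i - 1 - i') * w i'" by simp
  qed
  thus ?thesis by (simp add: algebra_simps)
qed

lemma sum_powr_le:
  fixes x :: "'i \<Rightarrow> real"
  assumes I: "finite I" "I \<noteq> {}" and nn: "\<And>i. i \<in> I \<Longrightarrow> x i \<ge> 0" and r: "r > 0"
  shows "(\<Sum>i\<in>I. x i) powr r \<le> real (card I) powr r * (\<Sum>i\<in>I. x i powr r)"
proof -
  define m where "m = Max (x ` I)"
  have mI: "m \<in> x ` I" unfolding m_def using I by (intro Max_in) auto
  then obtain i0 where i0: "i0 \<in> I" "m = x i0" by auto
  have le: "x i \<le> m" if "i \<in> I" for i unfolding m_def using I that by (intro Max_ge) auto
  have m0: "m \<ge> 0" using nn i0 by simp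
  have "(\<Sum>i\<in>I. x i) \<le> (\<Sum>i\<in>I. m)" using le by (intro sum_mono) auto
  hence "(\<Sum>i\<in>I. x i) powr r \<le> (real (card I) * m) powr r"
    using nn r by (intro powr_mono2) (auto intro: sum_nonneg)
  also have "\<dots> = real (card I) powr r * m powr r" using m0 by (simp add: powr_mult)
  also have "m powr r \<le> (\<Sum>i\<in>I. x i powr r)"
    unfolding i0(2) using I i0(1) by (intro member_le_sum) auto
  hence "real (card I) powr r * m powr r \<le> real (card I) powr r * (\<Sum>i\<in>I. x i powr r)"
    by (intro mult_left_mono) auto
  finally show ?thesis .
qed

lemma powr_le_1_plus:
  fixes x b c :: real
  assumes "x \<ge> 0" "0 < b" "b < c"
  shows "x powr b \<le> 1 + x powr c"
proof (cases "x \<le> 1")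
  case True
  hence "x powr b \<le> 1" using assms by (intro powr_le1) auto
  thus ?thesis by (smt (verit) powr_ge_zero)
next
  case False
  hence "x powr b \<le> x powr c" using assms by (intro powr_mono) auto
  thus ?thesis by simp
qed

lemma nn_lin3:
  fixes f g :: "'w \<Rightarrow> real"
  assumes P: "prob_space M" and mf: "f \<in> borel_measurable M" and mg: "g \<in> borel_measurable M"
    and f0: "\<And>x. f x \<ge> 0" and g0: "\<And>x. g x \<ge> 0" and p: "p \<ge> 0" and q: "q \<ge> 0" and r: "r \<ge> 0"
  shows "(\<integral>\<^sup>+ x. ennreal (p * f x + q + r * g x) \<partial>M)
     = ennreal p * (\<integral>\<^sup>+ x. ennreal (f x) \<partial>M) + ennreal q + ennreal r * (\<integral>\<^sup>+ x. ennreal (g x) \<partial>M)"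
proof -
  have e: "ennreal (p * f x + q + r * g x) = ennreal p * ennreal (f x) + ennreal q + ennreal r * ennreal (g x)" for x
    using f0[of x] g0[of x] p q r by (simp add: ennreal_plus ennreal_mult add_nonneg_nonneg)
  have "(\<integral>\<^sup>+ x. ennreal (p * f x + q + r * g x) \<partial>M)
      = (\<integral>\<^sup>+ x. ennreal p * ennreal (f x) + ennreal q + ennreal r * ennreal (g x) \<partial>M)"
    by (simp only: e)
  also have "\<dots> = (\<integral>\<^sup>+ x. ennreal p * ennreal (f x) + ennreal q \<partial>M) + (\<integral>\<^sup>+ x. ennreal r * ennreal (g x) \<partial>M)"
    using mf mg by (intro nn_integral_add) auto
  also have "(\<integral>\<^sup>+ x. ennreal p * ennreal (f x) + ennreal q \<partial>M) = (\<integral>\<^sup>+ x. ennreal p * ennreal (f x) \<partial>M) + (\<integral>\<^sup>+ x. ennreal q \<partial>M)"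
    using mf by (intro nn_integral_add) auto
  also have "(\<integral>\<^sup>+ x. ennreal p * ennreal (f x) \<partial>M) = ennreal p * (\<integral>\<^sup>+ x. ennreal (f x) \<partial>M)"
    using mf by (intro nn_integral_cmult) auto
  also have "(\<integral>\<^sup>+ x. ennreal r * ennreal (g x) \<partial>M) = ennreal r * (\<integral>\<^sup>+ x. ennreal (g x) \<partial>M)"
    using mg by (intro nn_integral_cmult) auto
  also have "(\<integral>\<^sup>+ x. ennreal q \<partial>M) = ennreal q" using prob_space.emeasure_space_1[OF P] by simp
  finally show ?thesis .
qed

locale qscheme =
  fixes a \<alpha> \<beta> K :: real and Mb T :: nat
  assumes a_ge: "a \<ge> 1" and Mb_ge: "Mb \<ge> 2" and T_pos: "T \<ge> 1"
    and eps: "4 * a ^ T \<le> real (Mb ^ T) - 1"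
    and beta_pos: "0 < \<beta>" and beta_lt: "\<beta> < \<alpha>"
    and K_ge: "K \<ge> 1"
    and K_big: "2 powr \<alpha> * (a ^ T) powr \<alpha> * K powr (\<beta> - \<alpha>) \<le> 1/2"
begin

definition "N = Mb ^ T"
definition "A = a ^ T"

definition sym :: "real \<Rightarrow> real \<Rightarrow> nat" where
  "sym y L = (if \<bar>y\<bar> > L then N - 1 else min (N - 2) (nat \<lfloor>(y + L) * (real N - 1) / (2 * L)\<rfloor>))"

definition qv :: "nat \<Rightarrow> real \<Rightarrow> real" where
  "qv s L = (if s = N - 1 then 0 else - L + (2 * real s + 1) * L / (real N - 1))"

definition upd :: "real \<Rightarrow> real \<Rightarrow> real" where
  "upd L y = (if \<bar>y\<bar> > L then K * L else max (L / 2) 1)"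

definition V :: "real \<Rightarrow> real \<Rightarrow> real" where
  "V Y L = (if \<bar>Y\<bar> \<le> L then L powr \<beta> else 2 * K powr \<beta> * L powr (\<beta> - \<alpha>) * \<bar>Y\<bar> powr \<alpha>)"

definition "\<rho> = max ((1/2) powr \<beta>) (1/2::real)"
definition "Cw = 2 * K powr \<beta> * 2 powr \<alpha> + 1"

lemma N_ge: "N \<ge> 2"
proof -
  have "real (Mb ^ T) \<ge> 4 * a ^ T + 1" using eps by simp
  moreover have "a ^ T \<ge> 1" using a_ge by simp
  ultimately have "real (Mb ^ T) \<ge> 5" by simp
  thus ?thesis unfolding N_def by linarith
qed

lemma A_ge: "A \<ge> 1" unfolding A_def using a_ge by simp

lemma A_eps: "4 * A \<le> real N - 1" using eps unfolding A_def N_def by simp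

lemma alpha_pos: "\<alpha> > 0" using beta_pos beta_lt by simp

lemma rho_lt: "\<rho> < 1" unfolding \<rho>_def using beta_pos
  by (simp add: powr01_less_one)

lemma rho_ge: "\<rho> \<ge> (1/2) powr \<beta>" "\<rho> \<ge> 1/2" unfolding \<rho>_def by auto

lemma sym_less: "sym y L < N"
  using N_ge unfolding sym_def by auto

lemma sym_top: "sym y L = N - 1 \<longleftrightarrow> \<bar>y\<bar> > L"
  using N_ge unfolding sym_def by auto

lemma qerr:
  assumes "L > 0" "\<bar>Y\<bar> \<le> L"
  shows "\<bar>Y - qv (sym Y L) L\<bar> \<le> L / (real N - 1)"
proof -
  define c where "c = real N - 1"
  have c1: "c \<ge> 1" using N_ge unfolding c_def by simp
  define u where "u = (Y + L) * c / (2 * L)"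
  have u0: "u \<ge> 0" using assms c1 unfolding u_def by auto
  have uc: "u \<le> c" using assms c1 unfolding u_def by (auto simp: field_simps)
  define k where "k = min (N - 2) (nat \<lfloor>u\<rfloor>)"
  have sk: "sym Y L = k" using assms unfolding sym_def k_def u_def c_def by auto
  have kneq: "k \<noteq> N - 1" using N_ge unfolding k_def by auto
  have q: "qv k L = - L + (2 * real k + 1) * L / c" using kneq unfolding qv_def c_def by simp
  have Y: "Y = - L + 2 * L * u / c" using assms c1 unfolding u_def by (auto simp: field_simps)
  have d: "\<bar>u - real k - 1/2\<bar> \<le> 1/2"
  proof (cases "nat \<lfloor>u\<rfloor> \<le> N - 2")
    case True
    hence "k = nat \<lfloor>u\<rfloor>" unfolding k_def by simp
    hence "real k = of_int \<lfloor>u\<rfloor>" using u0 by simp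
    moreover have "of_int \<lfloor>u\<rfloor> \<le> u" "u < of_int \<lfloor>u\<rfloor> + 1" by linarith+
    ultimately show ?thesis by linarith
  next
    case False
    hence k: "k = N - 2" unfolding k_def by simp
    have "real (nat \<lfloor>u\<rfloor>) > real N - 2" using False N_ge by linarith
    hence "u > real N - 2" using u0 by linarith
    moreover have "real k = real N - 2" using k N_ge by simp
    ultimately show ?thesis using uc unfolding c_def by linarith
  qed
  have "Y - qv k L = 2 * L / c * (u - real k - 1/2)"
    unfolding q Y using c1 by (simp add: field_simps)
  hence "\<bar>Y - qv k L\<bar> = 2 * L / c * \<bar>u - real k - 1/2\<bar>"
    using assms c1 by (simp add: abs_mult)
  also have "\<dots> \<le> 2 * L / c * (1/2)"
    using d assms c1 by (intro mult_left_mono) auto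
  also have "2 * L / c * (1/2) = L / c" by simp
  finally show ?thesis using sk unfolding c_def by simp
qed

lemma V_nonneg: "L \<ge> 1 \<Longrightarrow> V Y L \<ge> 0"
  using K_ge unfolding V_def by auto

lemma V_ge: assumes "L \<ge> 1" shows "\<bar>Y\<bar> powr \<beta> \<le> V Y L"
proof (cases "\<bar>Y\<bar> \<le> L")
  case True thus ?thesis unfolding V_def using beta_pos by (auto intro: powr_mono2)
next
  case False
  hence YL: "\<bar>Y\<bar> > L" by simp
  have "\<bar>Y\<bar> powr \<beta> = L powr (\<beta> - \<alpha>) * \<bar>Y\<bar> powr \<alpha> * (L / \<bar>Y\<bar>) powr (\<alpha> - \<beta>)"
    using assms YL by (simp add: powr_divide powr_diff field_simps powr_add[symmetric])
  also have "\<dots> \<le> L powr (\<beta> - \<alpha>) * \<bar>Y\<bar> powr \<alpha> * 1"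
    using assms YL beta_lt by (intro mult_left_mono powr_le1) auto
  also have "\<dots> \<le> 2 * K powr \<beta> * (L powr (\<beta> - \<alpha>) * \<bar>Y\<bar> powr \<alpha>)"
  proof -
    have "K powr \<beta> \<ge> 1" using K_ge beta_pos by (simp add: ge_one_powr_ge_zero)
    hence "1 * (L powr (\<beta> - \<alpha>) * \<bar>Y\<bar> powr \<alpha>) \<le> (2 * K powr \<beta>) * (L powr (\<beta> - \<alpha>) * \<bar>Y\<bar> powr \<alpha>)"
      by (intro mult_right_mono) auto
    thus ?thesis by simp
  qed
  finally show ?thesis using False unfolding V_def by (simp add: mult.assoc)
qed

lemma V_step:
  assumes L1: "L \<ge> 1"
  shows "V (A * (Y - qv (sym Y L) L) + W) (upd L Y) \<le> \<rho> * V Y L + Cw * (1 + \<bar>W\<bar> powr \<alpha>)"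
proof -
  define Y' where "Y' = A * (Y - qv (sym Y L) L) + W"
  define L' where "L' = upd L Y"
  have Kb: "K powr \<beta> \<ge> 1" using K_ge beta_pos by (simp add: ge_one_powr_ge_zero)
  have Wn: "\<bar>W\<bar> powr \<alpha> \<ge> 0" by simp
  have Cw1: "Cw \<ge> 1" unfolding Cw_def using Kb by simp
  have Cw2: "Cw \<ge> 2 * K powr \<beta> * 2 powr \<alpha>" unfolding Cw_def by simp
  have CwW: "2 * K powr \<beta> * 2 powr \<alpha> * \<bar>W\<bar> powr \<alpha> \<le> Cw * (1 + \<bar>W\<bar> powr \<alpha>)"
  proof -
    have "2 * K powr \<beta> * 2 powr \<alpha> * \<bar>W\<bar> powr \<alpha> \<le> Cw * \<bar>W\<bar> powr \<alpha>"
      using Cw2 Wn by (intro mult_right_mono) auto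
    also have "\<dots> \<le> Cw * (1 + \<bar>W\<bar> powr \<alpha>)" using Cw1 by simp
    finally show ?thesis .
  qed
  have Vn: "V Y L \<ge> 0" using V_nonneg L1 .
  have rV: "\<rho> * V Y L \<ge> 0" using Vn rho_ge(2) by simp
  have CW0: "Cw * (1 + \<bar>W\<bar> powr \<alpha>) \<ge> 1" using Cw1 Wn
    by (metis add.commute le_add_same_cancel2 mult_le_cancel_left1 order.trans zero_less_one_class.zero_le_one linorder_not_less dual_order.strict_trans1 mult_nonneg_nonneg)
  have "V Y' L' \<le> \<rho> * V Y L + Cw * (1 + \<bar>W\<bar> powr \<alpha>)"
  proof (cases "\<bar>Y\<bar> > L")
    case False
    hence YL: "\<bar>Y\<bar> \<le> L" by simp
    have L': "L' = max (L/2) 1" using False unfolding L'_def upd_def by simp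
    have VY: "V Y L = L powr \<beta>" using YL unfolding V_def by simp
    have e: "\<bar>Y - qv (sym Y L) L\<bar> \<le> L / (real N - 1)" using qerr L1 YL by simp
    have "\<bar>A * (Y - qv (sym Y L) L)\<bar> \<le> A * (L / (real N - 1))"
      using mult_left_mono[OF e, of A] A_ge by (simp add: abs_mult)
    also have "\<dots> \<le> L / 4"
    proof -
      have c: "real N - 1 > 0" using N_ge by simp
      have "L * (4 * A) \<le> L * (real N - 1)" using A_eps L1 by (intro mult_left_mono) auto
      hence "A * L * 4 \<le> L * (real N - 1)" by (simp add: algebra_simps)
      thus ?thesis using c by (simp add: field_simps)
    qed
    finally have Y'b: "\<bar>Y'\<bar> \<le> L/4 + \<bar>W\<bar>" unfolding Y'_def by linarith
    show ?thesis
    proof (cases "\<bar>Y'\<bar> \<le> L'")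
      case True
      hence "V Y' L' = L' powr \<beta>" unfolding V_def by simp
      also have "\<dots> \<le> (L/2) powr \<beta> + 1"
      proof (cases "L/2 \<le> 1")
        case True hence "L' = 1" using L' by simp
        thus ?thesis by simp
      next
        case False hence e: "L' = L/2" using L' by simp
        show ?thesis unfolding e by simp
      qed
      also have "(L/2) powr \<beta> = (1/2) powr \<beta> * L powr \<beta>"
        using L1 by (simp add: powr_divide)
      also have "\<dots> \<le> \<rho> * V Y L" unfolding VY using rho_ge(1) by (intro mult_right_mono) auto
      finally show ?thesis using CW0 by linarith
    next
      case False
      have L'1: "L' \<ge> 1" "L' \<ge> L/2" using L' by auto
      have W4: "\<bar>W\<bar> > L/4" using False Y'b L'1 by linarith
      have Y'2: "\<bar>Y'\<bar> \<le> 2 * \<bar>W\<bar>" using Y'b W4 by linarith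
      have "V Y' L' = 2 * K powr \<beta> * L' powr (\<beta> - \<alpha>) * \<bar>Y'\<bar> powr \<alpha>"
        using False unfolding V_def by simp
      also have "\<dots> \<le> 2 * K powr \<beta> * 1 * \<bar>Y'\<bar> powr \<alpha>"
        using L'1 beta_lt by (intro mult_right_mono mult_left_mono powr_neg_le1) auto
      also have "\<dots> \<le> 2 * K powr \<beta> * 1 * (2 * \<bar>W\<bar>) powr \<alpha>"
        using Y'2 alpha_pos by (intro mult_left_mono powr_mono2) auto
      also have "\<dots> = 2 * K powr \<beta> * 2 powr \<alpha> * \<bar>W\<bar> powr \<alpha>"
        by (simp add: powr_mult)
      also have "\<dots> \<le> Cw * (1 + \<bar>W\<bar> powr \<alpha>)" by (rule CwW)
      finally show ?thesis using rV by linarith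
    qed
  next
    case True
    hence YL: "\<bar>Y\<bar> > L" by simp
    have L': "L' = K * L" using True unfolding L'_def upd_def by simp
    have q: "qv (sym Y L) L = 0" using True sym_top unfolding qv_def by simp
    have Y'e: "Y' = A * Y + W" unfolding Y'_def q by simp
    have VY: "V Y L = 2 * K powr \<beta> * (L powr (\<beta> - \<alpha>) * \<bar>Y\<bar> powr \<alpha>)"
      using YL unfolding V_def by simp
    have LL: "L powr \<beta> \<le> L powr (\<beta> - \<alpha>) * \<bar>Y\<bar> powr \<alpha>"
    proof -
      have "L powr \<beta> = L powr (\<beta> - \<alpha>) * L powr \<alpha>" using L1 by (simp add: powr_add[symmetric])
      also have "\<dots> \<le> L powr (\<beta> - \<alpha>) * \<bar>Y\<bar> powr \<alpha>"
        using YL L1 alpha_pos by (intro mult_left_mono powr_mono2) auto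
      finally show ?thesis .
    qed
    have KL1: "K * L \<ge> 1" using K_ge L1 by (smt (verit) mult_le_cancel_left1)
    show ?thesis
    proof (cases "\<bar>Y'\<bar> \<le> L'")
      case True
      hence "V Y' L' = (K * L) powr \<beta>" unfolding V_def L' by simp
      also have "\<dots> = K powr \<beta> * L powr \<beta>" using K_ge L1 by (simp add: powr_mult)
      also have "\<dots> \<le> K powr \<beta> * (L powr (\<beta> - \<alpha>) * \<bar>Y\<bar> powr \<alpha>)"
        using LL by (intro mult_left_mono) auto
      also have "\<dots> = (1/2) * V Y L" using VY by simp
      also have "\<dots> \<le> \<rho> * V Y L" using rho_ge(2) Vn by (intro mult_right_mono) auto
      finally show ?thesis using CW0 by linarith
    next
      case False
      have "V Y' L' = 2 * K powr \<beta> * (K * L) powr (\<beta> - \<alpha>) * \<bar>Y'\<bar> powr \<alpha>"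
        using False unfolding V_def L' by simp
      also have "\<bar>Y'\<bar> powr \<alpha> \<le> 2 powr \<alpha> * ((A * \<bar>Y\<bar>) powr \<alpha> + \<bar>W\<bar> powr \<alpha>)"
      proof -
        have "\<bar>Y'\<bar> \<le> A * \<bar>Y\<bar> + \<bar>W\<bar>" unfolding Y'e using abs_triangle_ineq[of "A*Y" W] A_ge by (simp add: abs_mult)
        hence "\<bar>Y'\<bar> powr \<alpha> \<le> (A * \<bar>Y\<bar> + \<bar>W\<bar>) powr \<alpha>" using alpha_pos by (intro powr_mono2) auto
        also have "\<dots> \<le> 2 powr \<alpha> * ((A * \<bar>Y\<bar>) powr \<alpha> + \<bar>W\<bar> powr \<alpha>)"
          using A_ge alpha_pos by (intro powr_sum_le) auto
        finally show ?thesis .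
      qed
      hence "2 * K powr \<beta> * (K * L) powr (\<beta> - \<alpha>) * \<bar>Y'\<bar> powr \<alpha> \<le>
          2 * K powr \<beta> * (K * L) powr (\<beta> - \<alpha>) * (2 powr \<alpha> * ((A * \<bar>Y\<bar>) powr \<alpha> + \<bar>W\<bar> powr \<alpha>))"
        by (intro mult_left_mono) auto
      also have "\<dots> = (2 powr \<alpha> * A powr \<alpha> * K powr (\<beta> - \<alpha>)) * (2 * K powr \<beta> * (L powr (\<beta> - \<alpha>) * \<bar>Y\<bar> powr \<alpha>))
           + 2 * K powr \<beta> * 2 powr \<alpha> * ((K * L) powr (\<beta> - \<alpha>) * \<bar>W\<bar> powr \<alpha>)"
        using K_ge L1 A_ge by (simp add: powr_mult algebra_simps)
      also have "\<dots> \<le> (1/2) * V Y L + 2 * K powr \<beta> * 2 powr \<alpha> * (1 * \<bar>W\<bar> powr \<alpha>)"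
      proof (rule add_mono)
        show "(2 powr \<alpha> * A powr \<alpha> * K powr (\<beta> - \<alpha>)) * (2 * K powr \<beta> * (L powr (\<beta> - \<alpha>) * \<bar>Y\<bar> powr \<alpha>)) \<le> (1/2) * V Y L"
          using mult_right_mono[OF K_big Vn] unfolding A_def VY by simp
        show "2 * K powr \<beta> * 2 powr \<alpha> * ((K * L) powr (\<beta> - \<alpha>) * \<bar>W\<bar> powr \<alpha>) \<le> 2 * K powr \<beta> * 2 powr \<alpha> * (1 * \<bar>W\<bar> powr \<alpha>)"
          using KL1 beta_lt by (intro mult_left_mono mult_right_mono powr_neg_le1) auto
      qed
      also have "\<dots> \<le> \<rho> * V Y L + Cw * (1 + \<bar>W\<bar> powr \<alpha>)"
        using rho_ge(2) Vn CwW mult_right_mono[OF rho_ge(2) Vn] by linarith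
      finally show ?thesis .
    qed
  qed
  thus ?thesis unfolding Y'_def L'_def .
qed

lemma digits_sum: "(\<Sum>i<n. ((s::nat) div b ^ i mod b) * b ^ i) = s mod b ^ n"
proof (induction n)
  case 0 thus ?case by simp
next
  case (Suc n)
  have "s mod b ^ Suc n = b ^ n * (s div b ^ n mod b) + s mod b ^ n"
    using mod_mult2_eq[of s "b ^ n" b] by (simp add: mult.commute)
  thus ?case using Suc by (simp add: mult.commute)
qed

primrec Lx :: "(nat \<Rightarrow> real) \<Rightarrow> nat \<Rightarrow> real" where
  "Lx x 0 = 1"
| "Lx x (Suc j) = upd (Lx x j) (x (j * T + 1))"

definition F :: "nat \<Rightarrow> (nat \<Rightarrow> real) \<Rightarrow> nat" where
  "F k x = (sym (x (((k - 1) div T) * T + 1)) (Lx x ((k - 1) div T)) div Mb ^ ((k - 1) mod T)) mod Mb + 1"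

definition dec :: "(nat \<Rightarrow> nat) \<Rightarrow> nat \<Rightarrow> nat" where
  "dec b j = (\<Sum>i<T. (b (j * T + 1 + i) - 1) * Mb ^ i)"

primrec Lc :: "(nat \<Rightarrow> nat) \<Rightarrow> nat \<Rightarrow> real" where
  "Lc b 0 = 1"
| "Lc b (Suc j) = (if dec b j = N - 1 then K * Lc b j else max (Lc b j / 2) 1)"

definition G :: "nat \<Rightarrow> (nat \<Rightarrow> nat) \<Rightarrow> real" where
  "G m b = (if (m - 1) mod T = T - 1 then A * qv (dec b ((m - 1) div T)) (Lc b ((m - 1) div T)) else 0)"

lemma Lx_ge1: "Lx x j \<ge> 1"
  by (induction j) (use K_ge in \<open>auto simp: upd_def intro: order_trans[OF _ mult_right_mono[of 1 K]]\<close>)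

lemma Lx_cong: "(\<And>j'. j' < j \<Longrightarrow> x (j' * T + 1) = x' (j' * T + 1)) \<Longrightarrow> Lx x j = Lx x' j"
  by (induction j) auto

lemma F_restrict:
  assumes "k \<ge> 1"
  shows "F k (\<lambda>j\<in>{1..k}. x j) = F k x"
proof -
  define j where "j = (k - 1) div T"
  have "j * T \<le> k - 1" unfolding j_def by simp
  hence jk: "j * T + 1 \<le> k" using assms by linarith
  have "j' * T + 1 \<le> k" if "j' \<le> j" for j'
    using jk that by (meson add_le_mono1 le_trans mult_le_mono1)
  hence "Lx (\<lambda>j\<in>{1..k}. x j) j = Lx x j"
    by (intro Lx_cong) auto
  moreover have "(\<lambda>j\<in>{1..k}. x j) (j * T + 1) = x (j * T + 1)" using jk by simp
  ultimately show ?thesis unfolding F_def j_def[symmetric] by simp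
qed

lemma Mb_pos: "Mb > 0" using Mb_ge by simp

lemma F_range: "F k x \<in> {1..Mb}"
  unfolding F_def using Mb_pos by (simp add: Suc_le_eq)

lemma dec_F: "dec (\<lambda>k. F k x) j = sym (x (j * T + 1)) (Lx x j)"
proof -
  have "dec (\<lambda>k. F k x) j = (\<Sum>i<T. (sym (x (j * T + 1)) (Lx x j) div Mb ^ i mod Mb) * Mb ^ i)"
    unfolding dec_def
  proof (intro sum.cong refl)
    fix i assume "i \<in> {..<T}"
    hence i: "i < T" by simp
    have "(j * T + 1 + i - 1) div T = j" "(j * T + 1 + i - 1) mod T = i"
      using i by auto
    thus "(F (j * T + 1 + i) x - 1) * Mb ^ i = (sym (x (j * T + 1)) (Lx x j) div Mb ^ i mod Mb) * Mb ^ i"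
      unfolding F_def by simp
  qed
  also have "\<dots> = sym (x (j * T + 1)) (Lx x j)"
    using digits_sum sym_less unfolding N_def by simp
  finally show ?thesis .
qed

lemma Lc_F: "Lc (\<lambda>k. F k x) j = Lx x j"
  by (induction j) (auto simp: dec_F sym_top[simplified] upd_def)

lemma dec_cong: "(\<And>i. i < T \<Longrightarrow> b (j * T + 1 + i) = b' (j * T + 1 + i)) \<Longrightarrow> dec b j = dec b' j"
  unfolding dec_def by (intro sum.cong) auto

lemma Lc_cong: "(\<And>k. k \<ge> 1 \<Longrightarrow> k \<le> j * T \<Longrightarrow> b k = b' k) \<Longrightarrow> Lc b j = Lc b' j"
proof (induction j)
  case 0 thus ?case by simp
next
  case (Suc j)
  have "Lc b j = Lc b' j" using Suc by (intro Suc.IH) auto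
  moreover have "dec b j = dec b' j"
    using Suc.prems T_pos by (intro dec_cong Suc.prems) auto
  ultimately show ?case by simp
qed

lemma G_cong:
  assumes "m \<ge> 1" "\<And>k. k \<ge> 1 \<Longrightarrow> k \<le> m \<Longrightarrow> b k = b' k"
  shows "G m b = G m b'"
proof (cases "(m - 1) mod T = T - 1")
  case True
  define j where "j = (m - 1) div T"
  have "j * T + (m - 1) mod T = m - 1" unfolding j_def by (rule div_mult_mod_eq)
  hence m: "m = j * T + T" using True assms(1) T_pos by linarith
  have "dec b j = dec b' j" using m by (intro dec_cong assms(2)) auto
  moreover have "Lc b j = Lc b' j" using m by (intro Lc_cong assms(2)) auto
  ultimately show ?thesis unfolding G_def j_def[symmetric] by simp
qed (simp add: G_def)

lemma G_F: "m \<ge> 1 \<Longrightarrow> G m (\<lambda>k\<in>{1..m}. F k x) =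
   (if (m - 1) mod T = T - 1 then A * qv (sym (x (((m - 1) div T) * T + 1)) (Lx x ((m - 1) div T))) (Lx x ((m - 1) div T)) else 0)"
proof -
  assume m: "m \<ge> 1"
  have "G m (\<lambda>k\<in>{1..m}. F k x) = G m (\<lambda>k. F k x)" using m by (intro G_cong) auto
  thus ?thesis unfolding G_def dec_F Lc_F by simp
qed

definition U :: "(nat \<Rightarrow> real) \<Rightarrow> nat \<Rightarrow> real" where
  "U X m = (if (m - 1) mod T = T - 1 then A * qv (sym (X (((m - 1) div T) * T + 1)) (Lx X ((m - 1) div T))) (Lx X ((m - 1) div T)) else 0)"

definition Xs :: "real \<Rightarrow> (nat \<Rightarrow> real) \<Rightarrow> nat \<Rightarrow> real" where
  "Xs x1 z k = traj a F G x1 z k k"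

lemma Xs_1: "Xs x1 z 1 = x1" unfolding Xs_def by (rule traj_1)

lemma Xs_rec: "m \<ge> 1 \<Longrightarrow> Xs x1 z (Suc m) = a * Xs x1 z m + z m - U (Xs x1 z) m"
proof -
  assume m: "m \<ge> 1"
  have "(\<lambda>k\<in>{1..m}. F k (\<lambda>j\<in>{1..k}. traj a F G x1 z j j)) = (\<lambda>k\<in>{1..m}. F k (Xs x1 z))"
  proof (rule restrict_ext)
    fix k assume "k \<in> {1..m}"
    thus "F k (\<lambda>j\<in>{1..k}. traj a F G x1 z j j) = F k (Xs x1 z)"
      using F_restrict[of k "Xs x1 z"] unfolding Xs_def by simp
  qed
  thus ?thesis using traj_rec[OF m, of a F G x1 z] G_F[OF m, of "Xs x1 z"]
    unfolding Xs_def[symmetric] U_def by simp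
qed

lemma block_pre:
  assumes rec: "\<And>m. m \<ge> 1 \<Longrightarrow> X (Suc m) = a * X m + z m - U X m" and i: "i < T"
  shows "X (j * T + 1 + i) = a ^ i * X (j * T + 1) + (\<Sum>i'<i. a ^ (i - 1 - i') * z (j * T + 1 + i'))"
  using i
proof (induction i)
  case 0 thus ?case by simp
next
  case (Suc i)
  have i: "i < T" "i \<noteq> T - 1" using Suc.prems by auto
  have d: "(j * T + 1 + i - 1) div T = j" "(j * T + 1 + i - 1) mod T = i" using i by auto
  have "U X (j * T + 1 + i) = 0" unfolding U_def d using i by simp
  hence "X (j * T + 1 + Suc i) = a * X (j * T + 1 + i) + z (j * T + 1 + i)"
    using rec[of "j * T + 1 + i"] by simp
  also have "\<dots> = a ^ Suc i * X (j * T + 1) + (\<Sum>i'<Suc i. a ^ (Suc i - 1 - i') * z (j * T + 1 + i'))"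
    unfolding Suc.IH[OF i(1)] by (rule pre_step)
  finally show ?case .
qed

lemma block_end:
  assumes rec: "\<And>m. m \<ge> 1 \<Longrightarrow> X (Suc m) = a * X m + z m - U X m"
  shows "X (Suc j * T + 1) = A * (X (j * T + 1) - qv (sym (X (j * T + 1)) (Lx X j)) (Lx X j))
          + (\<Sum>i<T. a ^ (T - 1 - i) * z (j * T + 1 + i))"
proof -
  define i where "i = T - 1"
  have i: "i < T" "Suc i = T" using T_pos unfolding i_def by auto
  have d: "(j * T + 1 + i - 1) div T = j" "(j * T + 1 + i - 1) mod T = i" using i by auto
  have c: "(j * T + 1 + i - 1) mod T = T - 1" using d(2) unfolding i_def .
  have u: "U X (j * T + 1 + i) = A * qv (sym (X (j * T + 1)) (Lx X j)) (Lx X j)"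
    unfolding U_def by (simp only: c d(1) simp_thms if_True)
  have e: "Suc j * T + 1 = Suc (j * T + 1 + i)"
  proof -
    have "Suc j * T = j * T + T" by simp
    thus ?thesis using i(2) by linarith
  qed
  have "X (Suc j * T + 1) = X (Suc (j * T + 1 + i))" by (simp only: e)
  also have "\<dots> = a * X (j * T + 1 + i) + z (j * T + 1 + i) - U X (j * T + 1 + i)"
    by (rule rec) simp
  also have "a * X (j * T + 1 + i) + z (j * T + 1 + i) = a ^ Suc i * X (j * T + 1) + (\<Sum>i'<Suc i. a ^ (Suc i - 1 - i') * z (j * T + 1 + i'))"
  proof -
    have bp: "X (j * T + 1 + i) = a ^ i * X (j * T + 1) + (\<Sum>i'<i. a ^ (i - 1 - i') * z (j * T + 1 + i'))"
      using rec i(1) by (rule block_pre)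
    show ?thesis unfolding bp by (rule pre_step)
  qed
  finally show ?thesis unfolding u i(2) A_def by (simp add: algebra_simps)
qed

definition W :: "(nat \<Rightarrow> real) \<Rightarrow> nat \<Rightarrow> real" where
  "W z j = (\<Sum>i<T. a ^ (T - 1 - i) * z (j * T + 1 + i))"

definition Zs :: "(nat \<Rightarrow> real) \<Rightarrow> nat \<Rightarrow> real" where
  "Zs z j = (\<Sum>i<T. \<bar>z (j * T + 1 + i)\<bar> powr \<alpha>)"

lemma Zs_nonneg: "Zs z j \<ge> 0" unfolding Zs_def by (intro sum_nonneg) auto

lemma a_pow_le: "i \<le> T \<Longrightarrow> a ^ i \<le> A"
  unfolding A_def using a_ge by (intro power_increasing) auto

lemma sumz_bound:
  "(\<Sum>i<T. \<bar>z (j * T + 1 + i)\<bar>) powr r \<le> real T powr r * (\<Sum>i<T. \<bar>z (j * T + 1 + i)\<bar> powr r)" if "r > 0"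
proof -
  have "0 \<in> {..<T}" using T_pos by simp
  hence "{..<T} \<noteq> {}" by blast
  thus ?thesis using sum_powr_le[of "{..<T}" "\<lambda>i. \<bar>z (j * T + 1 + i)\<bar>" r] that by simp
qed

lemma W_bound: "\<bar>W z j\<bar> powr \<alpha> \<le> (A * real T) powr \<alpha> * Zs z j"
proof -
  define S where "S = (\<Sum>i<T. \<bar>z (j * T + 1 + i)\<bar>)"
  have S0: "S \<ge> 0" unfolding S_def by (intro sum_nonneg) auto
  have "\<bar>W z j\<bar> \<le> (\<Sum>i<T. \<bar>a ^ (T - 1 - i) * z (j * T + 1 + i)\<bar>)"
    unfolding W_def by (rule sum_abs)
  also have "\<dots> \<le> (\<Sum>i<T. A * \<bar>z (j * T + 1 + i)\<bar>)"
  proof (intro sum_mono)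
    fix i assume "i \<in> {..<T}"
    have "a ^ (T - 1 - i) \<le> A" by (intro a_pow_le) auto
    moreover have "a ^ (T - 1 - i) \<ge> 0" using a_ge by simp
    ultimately show "\<bar>a ^ (T - 1 - i) * z (j * T + 1 + i)\<bar> \<le> A * \<bar>z (j * T + 1 + i)\<bar>"
      by (simp add: abs_mult mult_right_mono)
  qed
  also have "\<dots> = A * S" unfolding S_def by (simp add: sum_distrib_left)
  finally have "\<bar>W z j\<bar> powr \<alpha> \<le> (A * S) powr \<alpha>" using alpha_pos by (intro powr_mono2) auto
  also have "\<dots> = A powr \<alpha> * S powr \<alpha>" using A_ge S0 by (simp add: powr_mult)
  also have "\<dots> \<le> A powr \<alpha> * (real T powr \<alpha> * Zs z j)"
    unfolding S_def Zs_def using sumz_bound alpha_pos by (intro mult_left_mono) auto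
  also have "\<dots> = (A * real T) powr \<alpha> * Zs z j" using A_ge by (simp add: powr_mult)
  finally show ?thesis .
qed

lemma X_block_bound:
  assumes rec: "\<And>m. m \<ge> 1 \<Longrightarrow> X (Suc m) = a * X m + z m - U X m" and i: "i < T"
  shows "\<bar>X (j * T + 1 + i)\<bar> powr \<beta> \<le> A powr \<beta> * 2 powr \<beta> * (V (X (j * T + 1)) (Lx X j) + real T powr \<beta> * (real T + Zs z j))"
proof -
  define S where "S = (\<Sum>i<T. \<bar>z (j * T + 1 + i)\<bar>)"
  define Y where "Y = X (j * T + 1)"
  have S0: "S \<ge> 0" unfolding S_def by (intro sum_nonneg) auto
  have bp: "X (j * T + 1 + i) = a ^ i * Y + (\<Sum>i'<i. a ^ (i - 1 - i') * z (j * T + 1 + i'))"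
    unfolding Y_def using rec i by (rule block_pre)
  have "\<bar>X (j * T + 1 + i)\<bar> \<le> \<bar>a ^ i * Y\<bar> + \<bar>\<Sum>i'<i. a ^ (i - 1 - i') * z (j * T + 1 + i')\<bar>"
    unfolding bp by (rule abs_triangle_ineq)
  also have "\<bar>a ^ i * Y\<bar> \<le> A * \<bar>Y\<bar>"
    using a_pow_le[of i] i a_ge by (simp add: abs_mult mult_right_mono)
  also have "\<bar>\<Sum>i'<i. a ^ (i - 1 - i') * z (j * T + 1 + i')\<bar> \<le> (\<Sum>i'<i. \<bar>a ^ (i - 1 - i') * z (j * T + 1 + i')\<bar>)"
    by (rule sum_abs)
  also have "\<dots> \<le> (\<Sum>i'<i. A * \<bar>z (j * T + 1 + i')\<bar>)"
  proof (intro sum_mono)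
    fix i' assume "i' \<in> {..<i}"
    have "a ^ (i - 1 - i') \<le> A" using i by (intro a_pow_le) auto
    moreover have "a ^ (i - 1 - i') \<ge> 0" using a_ge by simp
    ultimately show "\<bar>a ^ (i - 1 - i') * z (j * T + 1 + i')\<bar> \<le> A * \<bar>z (j * T + 1 + i')\<bar>"
      by (simp add: abs_mult mult_right_mono)
  qed
  also have "\<dots> \<le> (\<Sum>i'<T. A * \<bar>z (j * T + 1 + i')\<bar>)"
    using i A_ge by (intro sum_mono2) auto
  also have "\<dots> = A * S" unfolding S_def by (simp add: sum_distrib_left)
  finally have "\<bar>X (j * T + 1 + i)\<bar> \<le> A * (\<bar>Y\<bar> + S)" by (simp add: algebra_simps)
  hence "\<bar>X (j * T + 1 + i)\<bar> powr \<beta> \<le> (A * (\<bar>Y\<bar> + S)) powr \<beta>"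
    using beta_pos by (intro powr_mono2) auto
  also have "\<dots> = A powr \<beta> * (\<bar>Y\<bar> + S) powr \<beta>" using A_ge S0 by (simp add: powr_mult)
  also have "(\<bar>Y\<bar> + S) powr \<beta> \<le> 2 powr \<beta> * (\<bar>Y\<bar> powr \<beta> + S powr \<beta>)"
    using S0 beta_pos by (intro powr_sum_le) auto
  also have "\<bar>Y\<bar> powr \<beta> \<le> V Y (Lx X j)" using Lx_ge1 by (rule V_ge)
  also have "S powr \<beta> \<le> real T powr \<beta> * (\<Sum>i<T. \<bar>z (j * T + 1 + i)\<bar> powr \<beta>)"
    unfolding S_def using sumz_bound beta_pos by auto
  also have "(\<Sum>i<T. \<bar>z (j * T + 1 + i)\<bar> powr \<beta>) \<le> (\<Sum>i<T. 1 + \<bar>z (j * T + 1 + i)\<bar> powr \<alpha>)"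
    using beta_pos beta_lt by (intro sum_mono powr_le_1_plus) auto
  also have "\<dots> = real T + Zs z j" unfolding Zs_def by (simp add: sum.distrib)
  finally show ?thesis unfolding Y_def using A_ge
    by (simp add: mult_left_mono mult_right_mono add_mono)
qed

primrec Vb :: "real \<Rightarrow> (nat \<Rightarrow> real) \<Rightarrow> nat \<Rightarrow> real" where
  "Vb x1 z 0 = 1 + 2 * K powr \<beta> * \<bar>x1\<bar> powr \<alpha>"
| "Vb x1 z (Suc j) = \<rho> * Vb x1 z j + Cw * (1 + (A * real T) powr \<alpha> * Zs z j)"

lemma Cw_pos: "Cw \<ge> 0" unfolding Cw_def by (simp add: add_nonneg_nonneg)

lemma rho_pos: "\<rho> \<ge> 0" using rho_ge by linarith

lemma V_chain:
  assumes rec: "\<And>m. m \<ge> 1 \<Longrightarrow> X (Suc m) = a * X m + z m - U X m" and X1: "X 1 = x1"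
  shows "V (X (j * T + 1)) (Lx X j) \<le> Vb x1 z j"
proof (induction j)
  case 0
  show ?case
  proof (cases "\<bar>x1\<bar> \<le> 1")
    case True thus ?thesis using X1 K_ge by (simp add: V_def)
  next
    case False thus ?thesis using X1 by (simp add: V_def)
  qed
next
  case (Suc j)
  have be: "X (Suc j * T + 1) = A * (X (j * T + 1) - qv (sym (X (j * T + 1)) (Lx X j)) (Lx X j)) + W z j"
    unfolding W_def using rec by (rule block_end)
  have "V (X (Suc j * T + 1)) (Lx X (Suc j)) =
        V (A * (X (j * T + 1) - qv (sym (X (j * T + 1)) (Lx X j)) (Lx X j)) + W z j) (upd (Lx X j) (X (j * T + 1)))"
    unfolding be by simp
  also have "\<dots> \<le> \<rho> * V (X (j * T + 1)) (Lx X j) + Cw * (1 + \<bar>W z j\<bar> powr \<alpha>)"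
    using Lx_ge1 by (rule V_step)
  also have "\<dots> \<le> \<rho> * Vb x1 z j + Cw * (1 + (A * real T) powr \<alpha> * Zs z j)"
    using Suc.IH W_bound rho_pos Cw_pos by (intro add_mono mult_left_mono) auto
  finally show ?case by simp
qed

lemma Xs_bound:
  assumes n: "n \<ge> 1"
  shows "\<bar>Xs x1 z n\<bar> powr \<beta> \<le> A powr \<beta> * 2 powr \<beta> *
     (Vb x1 z ((n - 1) div T) + real T powr \<beta> * (real T + Zs z ((n - 1) div T)))"
proof -
  define j where "j = (n - 1) div T"
  define i where "i = (n - 1) mod T"
  have i: "i < T" unfolding i_def using T_pos by simp
  have nn: "n = j * T + 1 + i" unfolding j_def i_def using n div_mult_mod_eq[of "n - 1" T] by linarith
  have rec: "\<And>m. m \<ge> 1 \<Longrightarrow> Xs x1 z (Suc m) = a * Xs x1 z m + z m - U (Xs x1 z) m"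
    by (rule Xs_rec)
  have "\<bar>Xs x1 z n\<bar> powr \<beta> \<le> A powr \<beta> * 2 powr \<beta> * (V (Xs x1 z (j * T + 1)) (Lx (Xs x1 z) j) + real T powr \<beta> * (real T + Zs z j))"
    unfolding nn using rec i by (rule X_block_bound)
  also have "\<dots> \<le> A powr \<beta> * 2 powr \<beta> * (Vb x1 z j + real T powr \<beta> * (real T + Zs z j))"
    using V_chain[OF rec Xs_1] by (intro mult_left_mono add_mono) auto
  finally show ?thesis unfolding j_def .
qed

lemma Lx_meas:
  "(\<And>j'. j' < j \<Longrightarrow> j' * T + 1 \<in> I) \<Longrightarrow> (\<lambda>x. Lx x j) \<in> borel_measurable (Pi\<^sub>M I (\<lambda>_. borel))"
proof (induction j)
  case 0 thus ?case by simp
next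
  case (Suc j)
  have m: "(\<lambda>x. Lx x j) \<in> borel_measurable (Pi\<^sub>M I (\<lambda>_. borel))" using Suc by auto
  have i: "j * T + 1 \<in> I" using Suc.prems by auto
  show ?case unfolding Lx.simps upd_def using m i by measurable
qed

lemma sym_meas:
  assumes "f \<in> borel_measurable M" "g \<in> borel_measurable M"
  shows "(\<lambda>x. sym (f x) (g x)) \<in> measurable M (count_space UNIV)"
  unfolding sym_def using assms by measurable

lemma F_meas_UNIV:
  assumes k: "k \<ge> 1"
  shows "F k \<in> measurable (Pi\<^sub>M {1..k} (\<lambda>_. borel)) (count_space UNIV)"
proof -
  define j where "j = (k - 1) div T"
  have "j * T \<le> k - 1" unfolding j_def by simp
  hence jk: "j * T + 1 \<le> k" using k by linarith
  have "j' * T + 1 \<in> {1..k}" if "j' < j" for j'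
    using jk that by (auto intro: order_trans[OF _ jk] mult_le_mono1)
  hence L: "(\<lambda>x. Lx x j) \<in> borel_measurable (Pi\<^sub>M {1..k} (\<lambda>_. borel))" by (rule Lx_meas)
  have c: "(\<lambda>x. x (j * T + 1)) \<in> borel_measurable (Pi\<^sub>M {1..k} (\<lambda>_. borel))"
  proof -
    have "j * T + 1 \<in> {1..k}" using jk by simp
    from measurable_component_singleton[OF this, of "\<lambda>_. borel"] show ?thesis by simp
  qed
  have "(\<lambda>x. sym (x (j * T + 1)) (Lx x j)) \<in> measurable (Pi\<^sub>M {1..k} (\<lambda>_. borel)) (count_space UNIV)"
    using c L by (rule sym_meas)
  hence "(\<lambda>x. (sym (x (j * T + 1)) (Lx x j) div Mb ^ ((k - 1) mod T)) mod Mb + 1) \<in> measurable (Pi\<^sub>M {1..k} (\<lambda>_. borel)) (count_space UNIV)"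
    by measurable
  thus ?thesis unfolding F_def j_def[symmetric] by (simp add: fun_eq_iff)
qed

lemma F_meas:
  assumes k: "k \<ge> 1"
  shows "F k \<in> measurable (Pi\<^sub>M {1..k} (\<lambda>_. borel)) (count_space {1..Mb})"
proof -
  have m: "F k \<in> measurable (Pi\<^sub>M {1..k} (\<lambda>_. borel)) (count_space UNIV)" using k by (rule F_meas_UNIV)
  show ?thesis unfolding measurable_count_space_eq2[OF finite_atLeastAtMost]
  proof (intro conjI ballI)
    show "F k \<in> space (Pi\<^sub>M {1..k} (\<lambda>_. borel)) \<rightarrow> {1..Mb}" using F_range by auto
    fix v assume "v \<in> {1..Mb}"
    show "F k -` {v} \<inter> space (Pi\<^sub>M {1..k} (\<lambda>_. borel)) \<in> sets (Pi\<^sub>M {1..k} (\<lambda>_. borel))"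
      using measurable_sets[OF m, of "{v}"] by simp
  qed
qed

lemma Vb_nonneg: "Vb x1 z j \<ge> 0"
proof (induction j)
  case 0 show ?case using K_ge by (simp add: add_nonneg_nonneg)
next
  case (Suc j) thus ?case using rho_pos Cw_pos Zs_nonneg
    by (simp add: add_nonneg_nonneg mult_nonneg_nonneg)
qed

lemma state_Xs: "state a F G X1 Z n \<omega> = Xs (X1 \<omega>) (\<lambda>k. Z k \<omega>) n"
  unfolding state_def Xs_def ..

lemma stable:
  fixes M :: "'w measure" and X1 :: "'w \<Rightarrow> real" and Z :: "nat \<Rightarrow> 'w \<Rightarrow> real"
  assumes P: "prob_space M" and mX: "X1 \<in> borel_measurable M"
    and mZ: "\<And>k. k \<ge> 1 \<Longrightarrow> Z k \<in> borel_measurable M"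
    and fX: "(\<integral>\<^sup>+ \<omega>. ennreal (\<bar>X1 \<omega>\<bar> powr \<alpha>) \<partial>M) < \<infinity>"
    and Sz: "Sz \<ge> 0" and fZ: "\<And>k. k \<ge> 1 \<Longrightarrow> (\<integral>\<^sup>+ \<omega>. ennreal (\<bar>Z k \<omega>\<bar> powr \<alpha>) \<partial>M) \<le> ennreal Sz"
  shows "moment_stable M a X1 Z \<beta> F G"
proof -
  define Zw where "Zw j \<omega> = Zs (\<lambda>k. Z k \<omega>) j" for j \<omega>
  define Vw where "Vw j \<omega> = Vb (X1 \<omega>) (\<lambda>k. Z k \<omega>) j" for j \<omega>
  have mZw: "Zw j \<in> borel_measurable M" for j
  proof -
    have "\<And>i. Z (j * T + 1 + i) \<in> borel_measurable M" by (rule mZ) simp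
    thus ?thesis unfolding Zw_def Zs_def by measurable
  qed
  have mVw: "Vw j \<in> borel_measurable M" for j
  proof (induction j)
    case 0 show ?case unfolding Vw_def Vb.simps using mX by measurable
  next
    case (Suc j)
    have e: "Vw (Suc j) = (\<lambda>\<omega>. \<rho> * Vw j \<omega> + Cw * (1 + (A * real T) powr \<alpha> * Zw j \<omega>))"
      unfolding Vw_def Zw_def by simp
    show ?case unfolding e using Suc mZw[of j] by measurable
  qed
  have Zw0: "Zw j \<omega> \<ge> 0" for j \<omega> unfolding Zw_def by (rule Zs_nonneg)
  have Vw0: "Vw j \<omega> \<ge> 0" for j \<omega> unfolding Vw_def by (rule Vb_nonneg)
  define c where "c = (A * real T) powr \<alpha>"
  have c0: "c \<ge> 0" unfolding c_def by simp
  have iZw: "(\<integral>\<^sup>+ \<omega>. ennreal (Zw j \<omega>) \<partial>M) \<le> ennreal (real T * Sz)" for j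
  proof -
    have "(\<integral>\<^sup>+ \<omega>. ennreal (Zw j \<omega>) \<partial>M) = (\<integral>\<^sup>+ \<omega>. (\<Sum>i<T. ennreal (\<bar>Z (j * T + 1 + i) \<omega>\<bar> powr \<alpha>)) \<partial>M)"
      unfolding Zw_def Zs_def by (simp add: sum_ennreal)
    also have "\<dots> = (\<Sum>i<T. (\<integral>\<^sup>+ \<omega>. ennreal (\<bar>Z (j * T + 1 + i) \<omega>\<bar> powr \<alpha>) \<partial>M))"
    proof (rule nn_integral_sum)
      fix i
      have "Z (j * T + 1 + i) \<in> borel_measurable M" by (rule mZ) simp
      thus "(\<lambda>\<omega>. ennreal (\<bar>Z (j * T + 1 + i) \<omega>\<bar> powr \<alpha>)) \<in> borel_measurable M" by measurable
    qed
    also have "\<dots> \<le> (\<Sum>i<T. ennreal Sz)" by (intro sum_mono fZ) simp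
    also have "\<dots> = ennreal (real T * Sz)" using Sz by (simp add: ennreal_mult ennreal_of_nat_eq_real_of_nat)
    finally show ?thesis .
  qed
  define D where "D = Cw + Cw * c * (real T * Sz)"
  have D0: "D \<ge> 0" unfolding D_def using Cw_pos c0 Sz by simp
  have iV0: "(\<integral>\<^sup>+ \<omega>. ennreal (Vw 0 \<omega>) \<partial>M) < \<infinity>"
  proof -
    have "(\<integral>\<^sup>+ \<omega>. ennreal (Vw 0 \<omega>) \<partial>M) = (\<integral>\<^sup>+ \<omega>. ennreal (0 * 0 + 1 + (2 * K powr \<beta>) * \<bar>X1 \<omega>\<bar> powr \<alpha>) \<partial>M)"
      unfolding Vw_def by simp
    also have "\<dots> = ennreal 0 * (\<integral>\<^sup>+ \<omega>. ennreal 0 \<partial>M) + ennreal 1 + ennreal (2 * K powr \<beta>) * (\<integral>\<^sup>+ \<omega>. ennreal (\<bar>X1 \<omega>\<bar> powr \<alpha>) \<partial>M)"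
      using mX by (intro nn_lin3[OF P]) auto
    also have "\<dots> < \<infinity>" using fX by (simp add: ennreal_mult_less_top)
    finally show ?thesis .
  qed
  define B0 where "B0 = enn2real (\<integral>\<^sup>+ \<omega>. ennreal (Vw 0 \<omega>) \<partial>M)"
  define B where "B = max B0 (D / (1 - \<rho>))"
  have B0: "(\<integral>\<^sup>+ \<omega>. ennreal (Vw 0 \<omega>) \<partial>M) = ennreal B0"
    unfolding B0_def using iV0 by (simp add: ennreal_enn2real_if)
  have Bge: "B \<ge> 0" unfolding B_def using D0 rho_lt by (simp add: le_max_iff_disj)
  have Bfix: "\<rho> * B + D \<le> B"
  proof -
    have r: "1 - \<rho> > 0" using rho_lt by simp
    have "D / (1 - \<rho>) \<le> B" unfolding B_def by simp
    hence "D \<le> B * (1 - \<rho>)" using r by (simp add: pos_divide_le_eq)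
    thus ?thesis by (simp add: algebra_simps)
  qed
  have iVw: "(\<integral>\<^sup>+ \<omega>. ennreal (Vw j \<omega>) \<partial>M) \<le> ennreal B" for j
  proof (induction j)
    case 0 show ?case unfolding B0 B_def by (intro ennreal_leI) simp
  next
    case (Suc j)
    have "(\<integral>\<^sup>+ \<omega>. ennreal (Vw (Suc j) \<omega>) \<partial>M) = (\<integral>\<^sup>+ \<omega>. ennreal (\<rho> * Vw j \<omega> + Cw + (Cw * c) * Zw j \<omega>) \<partial>M)"
      unfolding Vw_def Zw_def c_def by (simp add: algebra_simps)
    also have "\<dots> = ennreal \<rho> * (\<integral>\<^sup>+ \<omega>. ennreal (Vw j \<omega>) \<partial>M) + ennreal Cw + ennreal (Cw * c) * (\<integral>\<^sup>+ \<omega>. ennreal (Zw j \<omega>) \<partial>M)"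
      using rho_pos Cw_pos c0 Vw0 Zw0 by (intro nn_lin3[OF P mVw mZw]) auto
    also have "\<dots> \<le> ennreal \<rho> * ennreal B + ennreal Cw + ennreal (Cw * c) * ennreal (real T * Sz)"
      by (intro add_mono mult_left_mono Suc iZw order_refl) auto
    also have "\<dots> = ennreal (\<rho> * B + D)"
      unfolding D_def using rho_pos Bge Cw_pos c0 Sz by (simp add: ennreal_plus ennreal_mult[symmetric] add_nonneg_nonneg)
    also have "\<dots> \<le> ennreal B" using Bfix by (rule ennreal_leI)
    finally show ?case .
  qed
  define C where "C = A powr \<beta> * 2 powr \<beta>"
  have C0: "C \<ge> 0" unfolding C_def by simp
  define E where "E = C * B + C * (real T powr \<beta> * real T) + C * real T powr \<beta> * (real T * Sz)"
  have bound: "(\<integral>\<^sup>+ \<omega>. ennreal (\<bar>state a F G X1 Z n \<omega>\<bar> powr \<beta>) \<partial>M) \<le> ennreal E" if n: "n \<ge> 1" for n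
  proof -
    define j where "j = (n - 1) div T"
    have "(\<integral>\<^sup>+ \<omega>. ennreal (\<bar>state a F G X1 Z n \<omega>\<bar> powr \<beta>) \<partial>M)
        \<le> (\<integral>\<^sup>+ \<omega>. ennreal (C * Vw j \<omega> + C * (real T powr \<beta> * real T) + (C * real T powr \<beta>) * Zw j \<omega>) \<partial>M)"
    proof (intro nn_integral_mono ennreal_leI)
      fix \<omega>
      have "\<bar>state a F G X1 Z n \<omega>\<bar> powr \<beta> \<le> C * (Vw j \<omega> + real T powr \<beta> * (real T + Zw j \<omega>))"
        unfolding state_Xs C_def Vw_def Zw_def j_def using n by (rule Xs_bound)
      thus "\<bar>state a F G X1 Z n \<omega>\<bar> powr \<beta> \<le> C * Vw j \<omega> + C * (real T powr \<beta> * real T) + (C * real T powr \<beta>) * Zw j \<omega>"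
        by (simp add: algebra_simps)
    qed
    also have "\<dots> = ennreal C * (\<integral>\<^sup>+ \<omega>. ennreal (Vw j \<omega>) \<partial>M) + ennreal (C * (real T powr \<beta> * real T)) + ennreal (C * real T powr \<beta>) * (\<integral>\<^sup>+ \<omega>. ennreal (Zw j \<omega>) \<partial>M)"
      using C0 Vw0 Zw0 by (intro nn_lin3[OF P mVw mZw]) auto
    also have "\<dots> \<le> ennreal C * ennreal B + ennreal (C * (real T powr \<beta> * real T)) + ennreal (C * real T powr \<beta>) * ennreal (real T * Sz)"
      by (intro add_mono mult_left_mono iVw iZw order_refl) auto
    also have "\<dots> = ennreal E"
      unfolding E_def using C0 Bge Sz by (simp add: ennreal_plus ennreal_mult[symmetric] add_nonneg_nonneg)
    finally show ?thesis .
  qed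
  have "limsup (\<lambda>n. \<integral>\<^sup>+ \<omega>. ennreal (\<bar>state a F G X1 Z n \<omega>\<bar> powr \<beta>) \<partial>M) \<le> ennreal E"
    by (intro Limsup_bounded eventually_sequentiallyI[of 1]) (rule bound)
  also have "\<dots> < \<infinity>" by simp
  finally show ?thesis unfolding moment_stable_def .
qed

end

theorem theorem1:
  fixes M :: "'w measure" and a \<alpha> \<beta> :: real
    and X1 :: "'w \<Rightarrow> real" and Z :: "nat \<Rightarrow> 'w \<Rightarrow> real"
  assumes "prob_space M"
    and "a \<ge> 1" and "\<alpha> > 0"
    and "prob_space.indep_vars M (\<lambda>_. borel) (\<lambda>i. if i = 0 then X1 else Z i) UNIV"
    and "(\<integral>\<^sup>+ \<omega>. ennreal (\<bar>X1 \<omega>\<bar> powr \<alpha>) \<partial>M) < \<infinity>"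
    and "(SUP n\<in>{1..}. \<integral>\<^sup>+ \<omega>. ennreal (\<bar>Z n \<omega>\<bar> powr \<alpha>) \<partial>M) < \<infinity>"
    and "0 < \<beta>" and "\<beta> < \<alpha>"
  shows "Mstar M a X1 Z \<beta> \<le> nat \<lfloor>a\<rfloor> + 1"
proof -
  note P = assms(1) and a1 = assms(2) and ind = assms(4) and fX = assms(5) and fS = assms(6)
    and b0 = assms(7) and ba = assms(8)
  define Mb where "Mb = nat \<lfloor>a\<rfloor> + 1"
  have "(1::int) \<le> \<lfloor>a\<rfloor>" using a1 le_floor_iff[of 1 a] by simp
  hence fl: "of_int \<lfloor>a\<rfloor> \<ge> (1::real)" by simp
  have Mba: "real Mb > a" unfolding Mb_def using fl by linarith
  have Mb2: "Mb \<ge> 2" unfolding Mb_def using fl by linarith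
  define r where "r = real Mb / a"
  have r1: "r > 1" unfolding r_def using Mba a1 by simp
  obtain n where n: "5 < r ^ n" using real_arch_pow[OF r1] by blast
  define T where "T = Suc n"
  have T1: "T \<ge> 1" unfolding T_def by simp
  have rT: "r ^ T > 5"
  proof -
    have "r ^ n \<le> r ^ T" unfolding T_def using r1 by (intro power_increasing) auto
    thus ?thesis using n by simp
  qed
  have aT: "a ^ T \<ge> 1" using a1 by simp
  have "real (Mb ^ T) = r ^ T * a ^ T" unfolding r_def using a1 by (simp add: power_divide)
  also have "\<dots> \<ge> 5 * a ^ T" using rT aT by (intro mult_right_mono) auto
  finally have eps: "4 * a ^ T \<le> real (Mb ^ T) - 1" using aT by linarith
  define c where "c = 2 powr \<alpha> * (a ^ T) powr \<alpha>"
  have h1: "2 powr \<alpha> \<ge> 1" by (rule ge_one_powr_ge_zero) (use assms(3) in auto)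
  have h2: "(a ^ T) powr \<alpha> \<ge> 1" by (rule ge_one_powr_ge_zero) (use aT assms(3) in auto)
  have c1: "c \<ge> 1" unfolding c_def using mult_mono[OF h1 h2] by simp
  define K0 where "K0 = (2 * c) powr (1 / (\<alpha> - \<beta>))"
  define K where "K = max 1 K0"
  have K1: "K \<ge> 1" unfolding K_def by simp
  have K0pos: "K0 > 0" unfolding K0_def using c1 by simp
  have "K powr (\<beta> - \<alpha>) \<le> K0 powr (\<beta> - \<alpha>)"
  proof (rule powr_mono2')
    show "\<beta> - \<alpha> \<le> 0" using ba by simp
    show "K0 > 0" by (rule K0pos)
    show "K0 \<le> K" unfolding K_def by simp
  qed
  also have "K0 powr (\<beta> - \<alpha>) = (2 * c) powr (1 / (\<alpha> - \<beta>) * (\<beta> - \<alpha>))"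
    unfolding K0_def by (rule powr_powr)
  also have "1 / (\<alpha> - \<beta>) * (\<beta> - \<alpha>) = -1"
  proof -
    have ne: "\<alpha> - \<beta> \<noteq> 0" using ba by simp
    have "\<beta> - \<alpha> = - (\<alpha> - \<beta>)" by simp
    thus ?thesis using ne by (simp only: mult_minus_right) simp
  qed
  also have "(2 * c) powr (-1) = 1 / (2 * c)"
  proof -
    have "(2 * c) powr (-1) = inverse ((2 * c) powr 1)" by (rule powr_minus)
    also have "(2 * c) powr 1 = 2 * c" using c1 by (intro powr_one) simp
    finally show ?thesis by (simp add: inverse_eq_divide)
  qed
  finally have "c * K powr (\<beta> - \<alpha>) \<le> c * (1 / (2 * c))" using c1 by (intro mult_left_mono) auto
  also have "\<dots> = 1/2" using c1 by simp
  finally have Kbig: "2 powr \<alpha> * (a ^ T) powr \<alpha> * K powr (\<beta> - \<alpha>) \<le> 1/2" unfolding c_def .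
  interpret Q: qscheme a \<alpha> \<beta> K Mb T
    using a1 Mb2 T1 eps b0 ba K1 Kbig by unfold_locales auto
  have qc: "quantizer_controller Mb Q.F Q.G"
    unfolding quantizer_controller_def using Q.F_meas by auto
  have rv: "\<forall>i\<in>UNIV. (\<lambda>i. if i = 0 then X1 else Z i) i \<in> borel_measurable M"
  proof -
    have "(\<forall>i\<in>UNIV. (\<lambda>i. if i = 0 then X1 else Z i) i \<in> borel_measurable M) \<and>
      prob_space.indep_sets M (\<lambda>i. sigma_sets (space M) { ((\<lambda>i. if i = 0 then X1 else Z i) i) -` A \<inter> space M | A. A \<in> sets borel}) UNIV"
      using ind unfolding prob_space.indep_vars_def[OF P] .
    thus ?thesis by (rule conjunct1)
  qed
  have mX: "X1 \<in> borel_measurable M"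
  proof -
    have "(\<lambda>i. if i = 0 then X1 else Z i) 0 \<in> borel_measurable M" using rv by blast
    thus ?thesis by simp
  qed
  have mZ: "Z k \<in> borel_measurable M" if "k \<ge> 1" for k
  proof -
    have "(\<lambda>i. if i = 0 then X1 else Z i) k \<in> borel_measurable M" using rv by blast
    thus ?thesis using that by simp
  qed
  define S where "S = (SUP n\<in>{1..}. \<integral>\<^sup>+ \<omega>. ennreal (\<bar>Z n \<omega>\<bar> powr \<alpha>) \<partial>M)"
  define Sz where "Sz = enn2real S"
  have SS: "S = ennreal Sz" unfolding Sz_def using fS unfolding S_def[symmetric] by (simp add: ennreal_enn2real_if)
  have fZ: "(\<integral>\<^sup>+ \<omega>. ennreal (\<bar>Z k \<omega>\<bar> powr \<alpha>) \<partial>M) \<le> ennreal Sz" if "k \<ge> 1" for k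
    unfolding SS[symmetric] S_def using that by (intro SUP_upper) auto
  have ms: "moment_stable M a X1 Z \<beta> Q.F Q.G"
  proof -
    have Sz0: "Sz \<ge> 0" unfolding Sz_def by (rule enn2real_nonneg)
    show ?thesis using P mX mZ fX Sz0 fZ by (rule Q.stable)
  qed
  have "Mstar M a X1 Z \<beta> \<le> Mb"
    unfolding Mstar_def using qc ms by (intro Least_le) blast
  thus ?thesis unfolding Mb_def .
qed

end
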